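(* Let $f:\mathbb{R}^n\to\mathbb{R}$ be continuously differentiable and bounded below with $\nabla f$ Lipschitz continuous on $\mathbb{R}^n$, let $s$ be an integer with $0<s<n$, and let $\{\mathbf{x}^k\}$ be the sequence generated by the partial sparse-simplex method. Then any accumulation point $\mathbf{x}^*$ of $\{\mathbf{x}^k\}$ is an $L_2(f)$-stationary point of the problem (P): minimize $f(\mathbf{x})$ subject to $\|\mathbf{x}\|_0\le s$; i.e. $\nabla_i f(\mathbf{x}^* )=0$ for $i\in I_1(\mathbf{x}^* )$ and $|\nabla_i f(\mathbf{x}^* )|\le L_2(f)M_s(\mathbf{x}^* )$ for $i\in I_0(\mathbf{x}^* )$.
   Context: $\|\mathbf{x}\|_0$ is the number of nonzero components, $C_s=\{\mathbf{x}:\|\mathbf{x}\|_0\le s\}$, $I_1(\mathbf{x})=\{i:x_i\neq0\}$, $I_0(\mathbf{x})=\{i:x_i=0\}$, $M_s(\mathbf{x})$ the $s$-th largest absolute value among components of $\mathbf{x}$, $\mathbf{e}_i$ the $i$-th standard basis vector. For $i\neq j$, $\nabla_{i,j}f(\mathbf{x})\in\mathbb{R}^2$ is the vector of the $i$-th and $j$-th partial derivatives, $L_{i,j}(f)$ is a constant with $\|\nabla_{i,j}f(\mathbf{x})-\nabla_{i,j}f(\mathbf{x}+\mathbf{d})\|\le L_{i,j}(f)\|\mathbf{d}\|$ for all $\mathbf{x}$ and all $\mathbf{d}$ with at most two nonzero components, and $L_2(f)=\max_{i\neq j}L_{i,j}(f)$. Partial sparse-simplex method (all one-dimensional minima assumed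 attained): choose $\mathbf{x}^0\in C_s$. At step $k$: if $\|\mathbf{x}^k\|_0<s$, for each $i$ let $t_i\in\operatorname{argmin}_t f(\mathbf{x}^k+t\mathbf{e}_i)$, $f_i=\min_t f(\mathbf{x}^k+t\mathbf{e}_i)$, $i_k\in\operatorname{argmin}_i f_i$; if $f_{i_k}<f(\mathbf{x}^k)$ set $\mathbf{x}^{k+1}=\mathbf{x}^k+t_{i_k}\mathbf{e}_{i_k}$, else stop. If $\|\mathbf{x}^k\|_0=s$: for $i\in I_1(\mathbf{x}^k)$ let $f_i=\min_t f(\mathbf{x}^k+t\mathbf{e}_i)$; let $i_k^1\in\operatorname{argmin}\{f_i:i\in I_1(\mathbf{x}^k)\}$, $i_k^2\in\operatorname{argmax}\{|\nabla_i f(\mathbf{x}^k)|:i\in I_0(\mathbf{x}^k)\}$, $m_k\in\operatorname{argmin}\{|x_i^k|:i\in I_1(\mathbf{x}^k)\}$; let $D_k^1=\min_t f(\mathbf{x}^k+t\mathbf{e}_{i_k^1})$ with minimizer $T_k^1$, and $D_k^2=\min_t f(\mathbf{x}^k-x^k_{m_k}\mathbf{e}_{m_k}+t\mathbf{e}_{i_k^2})$ with minimizer $T_k^2$; if $D_k^1<D_k^2$ set $\mathbf{x}^{k+1}=\mathbf{x}^k+T_k^1\mathbf{e}_{i_k^1}$, else $\mathbf{x}^{k+1}=\mathbf{x}^k-x^k_{m_k}\mathbf{e}_{m_k}+T_k^2\mathbf{e}_{i_k^2}$. *)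

theory Defs
  imports "HOL-Analysis.Analysis" "HOL-Library.Multiset"
begin

text \<open>Vectors in R^n are modelled as real^'n; standard basis vector e_i is axis i 1.\<close>

definition l0norm :: "real^'n \<Rightarrow> nat" where
  "l0norm x = card {i. x $ i \<noteq> 0}"

definition I1 :: "real^'n \<Rightarrow> 'n set" where
  "I1 x = {i. x $ i \<noteq> 0}"

definition I0 :: "real^'n \<Rightarrow> 'n set" where
  "I0 x = {i. x $ i = 0}"

text \<open>M_s(x): the s-th largest absolute value among the components of x
  (counted with multiplicity; s \<ge> 1).\<close>
definition Ms :: "nat \<Rightarrow> real^'n \<Rightarrow> real" where
  "Ms s x = rev (sorted_list_of_multiset (image_mset (\<lambda>i. \<bar>x $ i\<bar>) (mset_set (UNIV :: 'n set)))) ! (s - 1)"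

definition lmin :: "(real^'n \<Rightarrow> real) \<Rightarrow> real^'n \<Rightarrow> 'n \<Rightarrow> real" where
  "lmin f x i = (INF t. f (x + t *\<^sub>R axis i 1))"

definition is_lmin :: "(real^'n \<Rightarrow> real) \<Rightarrow> real^'n \<Rightarrow> 'n \<Rightarrow> real \<Rightarrow> bool" where
  "is_lmin f x i t \<longleftrightarrow> (\<forall>t'. f (x + t *\<^sub>R axis i 1) \<le> f (x + t' *\<^sub>R axis i 1))"

text \<open>When the method stops (case \<open>l0norm x < s\<close> with no improving coordinate),
  the sequence is continued as constant: x' = x.\<close>
definition pss_step :: "(real^'n \<Rightarrow> real) \<Rightarrow> (real^'n \<Rightarrow> real^'n) \<Rightarrow> nat \<Rightarrow> real^'n \<Rightarrow> real^'n \<Rightarrow> bool" where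
  "pss_step f grad s x x' \<longleftrightarrow>
     (l0norm x < s \<and>
        ((\<exists>i t. (\<forall>j. lmin f x i \<le> lmin f x j) \<and> is_lmin f x i t \<and>
                 lmin f x i < f x \<and> x' = x + t *\<^sub>R axis i 1)
         \<or> ((\<exists>i. (\<forall>j. lmin f x i \<le> lmin f x j) \<and> \<not> lmin f x i < f x) \<and> x' = x)))
   \<or> (l0norm x = s \<and>
        (\<exists>i1 i2 m. i1 \<in> I1 x \<and> (\<forall>j\<in>I1 x. lmin f x i1 \<le> lmin f x j) \<and>
           i2 \<in> I0 x \<and> (\<forall>j\<in>I0 x. \<bar>grad x $ j\<bar> \<le> \<bar>grad x $ i2\<bar>) \<and>
           m \<in> I1 x \<and> (\<forall>j\<in>I1 x. \<bar>x $ m\<bar> \<le> \<bar>x $ j\<bar>) \<and>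
           (let y = x - (x $ m) *\<^sub>R axis m 1 in
             (lmin f x i1 < lmin f y i2 \<and>
                (\<exists>T. is_lmin f x i1 T \<and> x' = x + T *\<^sub>R axis i1 1))
           \<or> (\<not> lmin f x i1 < lmin f y i2 \<and>
                (\<exists>T. is_lmin f y i2 T \<and> x' = y + T *\<^sub>R axis i2 1)))))"

definition pss_sequence :: "(real^'n \<Rightarrow> real) \<Rightarrow> (real^'n \<Rightarrow> real^'n) \<Rightarrow> nat \<Rightarrow> (nat \<Rightarrow> real^'n) \<Rightarrow> bool" where
  "pss_sequence f grad s xs \<longleftrightarrow> l0norm (xs 0) \<le> s \<and> (\<forall>k. pss_step f grad s (xs k) (xs (Suc k)))"

definition L2_const :: "(real^'n \<Rightarrow> real^'n) \<Rightarrow> real \<Rightarrow> bool" where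
  "L2_const grad L \<longleftrightarrow> (\<forall>i j x d. i \<noteq> j \<longrightarrow> card {k. d $ k \<noteq> 0} \<le> 2 \<longrightarrow>
      sqrt ((grad x $ i - grad (x + d) $ i)\<^sup>2 + (grad x $ j - grad (x + d) $ j)\<^sup>2) \<le> L * norm d)"

end

theory Submission
  imports Defs
begin

lemma cs2: fixes p q r w :: real shows "p*q + r*w \<le> sqrt(p\<^sup>2+r\<^sup>2) * sqrt(q\<^sup>2+w\<^sup>2)"
proof -
  have "(p*q + r*w)\<^sup>2 \<le> (p\<^sup>2+r\<^sup>2) * (q\<^sup>2+w\<^sup>2)"
    using sum_squares_ge_zero[of "p*w - r*q" 0] by (simp add: power2_eq_square algebra_simps)
  hence "p*q + r*w \<le> sqrt ((p\<^sup>2+r\<^sup>2) * (q\<^sup>2+w\<^sup>2))" by (rule real_le_rsqrt)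
  thus ?thesis by (simp add: real_sqrt_mult)
qed

lemma norm2ax: fixes a b :: "'n::finite" assumes "a \<noteq> b"
  shows "norm (u *\<^sub>R axis a 1 + v *\<^sub>R axis b (1::real)) = sqrt (u\<^sup>2+v\<^sup>2)"
proof -
  have "(norm (u *\<^sub>R axis a 1 + v *\<^sub>R axis b (1::real)))\<^sup>2 = u\<^sup>2+v\<^sup>2"
    unfolding power2_norm_eq_inner using assms
    by (simp add: inner_add_left inner_add_right inner_axis_axis power2_eq_square)
  thus ?thesis by (metis norm_ge_zero real_sqrt_unique)
qed

lemma descent2:
  fixes f :: "real^'n \<Rightarrow> real" and grad :: "real^'n \<Rightarrow> real^'n"
  assumes deriv: "\<And>x. (f has_derivative (\<lambda>h. grad x \<bullet> h)) (at x)"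
    and L2: "L2_const grad L2" and ab: "a \<noteq> b"
  shows "f (x + (u *\<^sub>R axis a 1 + v *\<^sub>R axis b 1)) \<le> f x + u * grad x $ a + v * grad x $ b + L2/2 * (u\<^sup>2+v\<^sup>2)"
proof -
  define d where "d = u *\<^sub>R axis a 1 + v *\<^sub>R axis b (1::real)"
  have nd: "norm d = sqrt (u\<^sup>2+v\<^sup>2)" unfolding d_def using norm2ax[OF ab] .
  have gd: "\<And>y. grad y \<bullet> d = u * grad y $ a + v * grad y $ b"
    by (simp add: d_def inner_add_right inner_axis)
  define \<phi> where "\<phi> t = f (x + t *\<^sub>R d) - t * (grad x \<bullet> d) - L2/2 * t\<^sup>2 * (u\<^sup>2+v\<^sup>2)" for t
  have D: "DERIV \<phi> t :> (grad (x + t *\<^sub>R d) \<bullet> d - grad x \<bullet> d - L2 * t * (u\<^sup>2+v\<^sup>2))" for t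
  proof -
    have l: "((\<lambda>t. x + t *\<^sub>R d) has_derivative (\<lambda>h. h *\<^sub>R d)) (at t)"
      by (auto intro!: derivative_eq_intros)
    have "((\<lambda>t. f (x + t *\<^sub>R d)) has_derivative (\<lambda>h. grad (x + t *\<^sub>R d) \<bullet> (h *\<^sub>R d))) (at t)"
      using has_derivative_compose[OF l deriv] by (simp add: o_def)
    hence "((\<lambda>t. f (x + t *\<^sub>R d)) has_derivative (\<lambda>h. (grad (x + t *\<^sub>R d) \<bullet> d) * h)) (at t)"
      by (simp add: mult.commute)
    hence "DERIV (\<lambda>t. f (x + t *\<^sub>R d)) t :> (grad (x + t *\<^sub>R d) \<bullet> d)"
      by (simp add: has_field_derivative_def mult.commute[of _ "grad (x + t *\<^sub>R d) \<bullet> d"])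
    thus ?thesis unfolding \<phi>_def
      by (auto intro!: derivative_eq_intros)
  qed
  have "\<phi> 1 \<le> \<phi> 0"
  proof (rule DERIV_nonpos_imp_nonincreasing[of 0 1])
    fix t :: real assume t: "0 \<le> t" "t \<le> 1"
    let ?D = "grad x - grad (x + t *\<^sub>R d)"
    have cd: "card {k. (t *\<^sub>R d) $ k \<noteq> 0} \<le> 2"
    proof -
      have "{k. (t *\<^sub>R d) $ k \<noteq> 0} \<subseteq> {a, b}"
        by (auto simp: d_def axis_def)
      hence "card {k. (t *\<^sub>R d) $ k \<noteq> 0} \<le> card {a,b}" by (intro card_mono) auto
      also have "\<dots> \<le> 2" by (simp add: card_insert_if)
      finally show ?thesis .
    qed
    have "sqrt ((grad x $ a - grad (x + t *\<^sub>R d) $ a)\<^sup>2 + (grad x $ b - grad (x + t *\<^sub>R d) $ b)\<^sup>2) \<le> L2 * norm (t *\<^sub>R d)"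
      using L2 ab cd unfolding L2_const_def by blast
    hence "sqrt ((?D $ a)\<^sup>2 + (?D $ b)\<^sup>2) \<le> L2 * norm (t *\<^sub>R d)" by simp
    also have "\<dots> = L2 * t * sqrt (u\<^sup>2+v\<^sup>2)" using t nd by simp
    finally have lb: "sqrt ((?D $ a)\<^sup>2 + (?D $ b)\<^sup>2) \<le> L2 * t * sqrt (u\<^sup>2+v\<^sup>2)" .
    have "(grad (x + t *\<^sub>R d) \<bullet> d - grad x \<bullet> d) = (- ?D $ a) * u + (- ?D $ b) * v"
      by (simp add: gd algebra_simps)
    also have "\<dots> \<le> sqrt ((- ?D $ a)\<^sup>2 + (- ?D $ b)\<^sup>2) * sqrt (u\<^sup>2+v\<^sup>2)" by (rule cs2)
    also have "\<dots> \<le> L2 * t * sqrt (u\<^sup>2+v\<^sup>2) * sqrt (u\<^sup>2+v\<^sup>2)"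
      using lb by (intro mult_right_mono) (auto simp: power2_commute)
    also have "\<dots> = L2 * t * (u\<^sup>2+v\<^sup>2)" by simp
    finally show "\<exists>y. DERIV \<phi> t :> y \<and> y \<le> 0" using D[of t] by (intro exI[of _ "grad (x + t *\<^sub>R d) \<bullet> d - grad x \<bullet> d - L2 * t * (u\<^sup>2 + v\<^sup>2)"]) auto
  qed simp
  thus ?thesis unfolding \<phi>_def d_def by (simp add: gd[unfolded d_def])
qed

lemma exists_other: assumes "2 \<le> CARD('n::finite)" shows "\<exists>b::'n. b \<noteq> a"
proof (rule ccontr)
  assume "\<not> ?thesis" hence "(UNIV::'n set) = {a}" by auto
  hence "CARD('n) = card {a}" by (rule arg_cong)
  hence "CARD('n) = 1" by (simp only: card_1_singleton_iff card.insert card.empty) simp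
  with assms show False by simp
qed

lemma descent1:
  fixes f :: "real^'n \<Rightarrow> real" and grad :: "real^'n \<Rightarrow> real^'n"
  assumes deriv: "\<And>x. (f has_derivative (\<lambda>h. grad x \<bullet> h)) (at x)"
    and L2: "L2_const grad L2" and c2: "2 \<le> CARD('n)"
  shows "f (x + u *\<^sub>R axis a 1) \<le> f x + u * grad x $ a + L2/2 * u\<^sup>2"
proof -
  obtain b where "b \<noteq> a" using exists_other[OF c2] by blast
  from descent2[OF deriv L2, of a b x u 0] this show ?thesis by auto
qed

lemma L2_nonneg:
  assumes L2: "L2_const (grad :: real^'n \<Rightarrow> real^'n) L2" and c2: "2 \<le> CARD('n)"
  shows "0 \<le> L2"
proof -
  obtain a :: 'n where True by blast
  obtain b where ab: "b \<noteq> a" using exists_other[OF c2] by blast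
  have cs: "{k. axis a (1::real) $ k \<noteq> 0} = {a}" unfolding axis_def by auto
  have c: "card {k. axis a (1::real) $ k \<noteq> 0} \<le> 2" unfolding cs by simp
  have H: "sqrt ((grad 0 $ a - grad (0 + axis a 1) $ a)\<^sup>2 + (grad 0 $ b - grad (0 + axis a 1) $ b)\<^sup>2) \<le> L2 * norm (axis a (1::real))"
    using L2[unfolded L2_const_def, rule_format, of a b "axis a 1" 0] ab c by blast
  have "0 \<le> sqrt ((grad 0 $ a - grad (0 + axis a 1) $ a)\<^sup>2 + (grad 0 $ b - grad (0 + axis a 1) $ b)\<^sup>2)"
    by simp
  from order_trans[OF this H] show ?thesis by simp
qed

lemma lmin_le:
  assumes bdd: "\<exists>m. \<forall>x. m \<le> f x"
  shows "lmin f x i \<le> f (x + t *\<^sub>R axis i 1)"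
proof -
  from bdd obtain m where "\<forall>x. m \<le> f x" by blast
  hence "bdd_below (range (\<lambda>t. f (x + t *\<^sub>R axis i 1)))" by (auto intro: bdd_belowI)
  thus ?thesis unfolding lmin_def by (rule cINF_lower) simp
qed

lemma lmin_eq:
  assumes bdd: "\<exists>m. \<forall>x. m \<le> f x" and "is_lmin f x i t"
  shows "lmin f x i = f (x + t *\<^sub>R axis i 1)"
proof (rule antisym)
  show "lmin f x i \<le> f (x + t *\<^sub>R axis i 1)" by (rule lmin_le[OF bdd])
  show "f (x + t *\<^sub>R axis i 1) \<le> lmin f x i"
    unfolding lmin_def using assms(2) unfolding is_lmin_def by (intro cINF_greatest) auto
qed

lemma lmin_decr:
  fixes f :: "real^'n \<Rightarrow> real" and grad :: "real^'n \<Rightarrow> real^'n"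
  assumes deriv: "\<And>x. (f has_derivative (\<lambda>h. grad x \<bullet> h)) (at x)"
    and L2: "L2_const grad L2" and c2: "2 \<le> CARD('n)" and bdd: "\<exists>m. \<forall>x. m \<le> f x"
    and pos: "0 < L2"
  shows "lmin f x i \<le> f x - (grad x $ i)\<^sup>2 / (2*L2)"
proof -
  let ?g = "grad x $ i"
  have "lmin f x i \<le> f (x + (- ?g / L2) *\<^sub>R axis i 1)" by (rule lmin_le[OF bdd])
  also have "\<dots> \<le> f x + (- ?g / L2) * ?g + L2/2 * (- ?g / L2)\<^sup>2" by (rule descent1[OF deriv L2 c2])
  also have "\<dots> = f x - ?g\<^sup>2 / (2*L2)" using pos by (simp add: field_simps power2_eq_square)
  finally show ?thesis .
qed

lemma grad_zero:
  fixes f :: "real^'n \<Rightarrow> real" and grad :: "real^'n \<Rightarrow> real^'n"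
  assumes deriv: "\<And>x. (f has_derivative (\<lambda>h. grad x \<bullet> h)) (at x)"
    and L2: "L2_const grad 0" and c2: "2 \<le> CARD('n)" and bdd: "\<exists>m. \<forall>x. m \<le> f x"
  shows "grad x $ a = 0"
proof (rule ccontr)
  assume g: "grad x $ a \<noteq> 0"
  from bdd obtain m where m: "\<forall>x. m \<le> f x" by blast
  let ?u = "- (f x - m + 1) / grad x $ a"
  have "f (x + ?u *\<^sub>R axis a 1) \<le> f x + ?u * grad x $ a + 0/2 * ?u\<^sup>2" by (rule descent1[OF deriv L2 c2])
  also have "\<dots> = m - 1" using g by simp
  finally have "f (x + ?u *\<^sub>R axis a 1) \<le> m - 1" .
  moreover have "m \<le> f (x + ?u *\<^sub>R axis a 1)" using m by blast
  ultimately show False by linarith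
qed

lemma swap_bound:
  fixes f :: "real^'n \<Rightarrow> real" and grad :: "real^'n \<Rightarrow> real^'n"
  assumes deriv: "\<And>x. (f has_derivative (\<lambda>h. grad x \<bullet> h)) (at x)"
    and L2: "L2_const grad L2" and bdd: "\<exists>m. \<forall>x. m \<le> f x"
    and pos: "0 < L2" and mi: "m \<noteq> i2"
  shows "lmin f (x - (x $ m) *\<^sub>R axis m 1) i2 \<le> f x - x $ m * grad x $ m - (grad x $ i2)\<^sup>2 / (2*L2) + L2/2 * (x $ m)\<^sup>2"
proof -
  let ?g = "grad x $ i2" let ?t = "- ?g / L2"
  have "lmin f (x - (x $ m) *\<^sub>R axis m 1) i2 \<le> f (x - (x $ m) *\<^sub>R axis m 1 + ?t *\<^sub>R axis i2 1)" by (rule lmin_le[OF bdd])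
  also have "x - (x $ m) *\<^sub>R axis m 1 + ?t *\<^sub>R axis i2 1 = x + ((- x $ m) *\<^sub>R axis m 1 + ?t *\<^sub>R axis i2 1)"
    by (simp add: algebra_simps)
  also have "f \<dots> \<le> f x + (- x $ m) * grad x $ m + ?t * ?g + L2/2 * ((- x $ m)\<^sup>2 + ?t\<^sup>2)"
    by (rule descent2[OF deriv L2 mi])
  also have "\<dots> = f x - x $ m * grad x $ m - ?g\<^sup>2 / (2*L2) + L2/2 * (x $ m)\<^sup>2"
    using pos by (simp add: field_simps power2_eq_square)
  finally show ?thesis .
qed

lemma Ms_props:
  fixes z :: "real^'n"
  assumes s0: "0 < s" and sc: "s \<le> CARD('n)"
  shows "0 \<le> Ms s z"
    and "\<And>S c. card S \<ge> s \<Longrightarrow> (\<forall>j\<in>S. c \<le> \<bar>z $ j\<bar>) \<Longrightarrow> c \<le> Ms s z"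
proof -
  define M where "M = image_mset (\<lambda>i. \<bar>z $ i\<bar>) (mset_set (UNIV :: 'n set))"
  define L where "L = rev (sorted_list_of_multiset M)"
  have Ms: "Ms s z = L ! (s - 1)" unfolding Ms_def L_def M_def ..
  have mL: "mset L = M" unfolding L_def by simp
  have len: "length L = CARD('n)"
    by (metis mL size_mset M_def size_image_mset size_mset_set)
  have srt: "sorted_wrt (\<lambda>x y. y \<le> x) L" unfolding L_def sorted_wrt_rev
    using sorted_sorted_list_of_multiset by (simp add: sorted_wrt_iff_nth_less)
  have sl: "s - 1 < length L" using len s0 sc by simp
  have "L ! (s - 1) \<in># M" using sl mL by (metis nth_mem set_mset_mset)
  then show "0 \<le> Ms s z" unfolding Ms M_def by auto
  fix S :: "'n set" and c
  assume cS: "card S \<ge> s" and Sc: "\<forall>j\<in>S. c \<le> \<bar>z $ j\<bar>"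
  show "c \<le> Ms s z"
  proof (rule ccontr)
    assume "\<not> c \<le> Ms s z"
    hence lt: "L ! (s - 1) < c" unfolding Ms by simp
    have "length (filter (\<lambda>v. c \<le> v) L) = size (filter_mset (\<lambda>v. c \<le> v) M)"
      by (metis mL mset_filter size_mset)
    also have "\<dots> = card {i. c \<le> \<bar>z $ i\<bar>}"
      unfolding M_def filter_mset_image_mset by simp
    finally have e1: "length (filter (\<lambda>v. c \<le> v) L) = card {i. c \<le> \<bar>z $ i\<bar>}" .
    have "card S \<le> card {i. c \<le> \<bar>z $ i\<bar>}" using Sc by (intro card_mono) auto
    hence ge: "s \<le> length (filter (\<lambda>v. c \<le> v) L)" using e1 cS by linarith
    have dr: "filter (\<lambda>v. c \<le> v) (drop (s - 1) L) = []"
    proof -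
      have "\<forall>v\<in>set (drop (s - 1) L). v \<le> L ! (s - 1)"
      proof
        fix v assume "v \<in> set (drop (s - 1) L)"
        then obtain t where t: "t < length L - (s - 1)" "v = L ! (s - 1 + t)"
          by (auto simp: in_set_conv_nth)
        show "v \<le> L ! (s - 1)"
        proof (cases "t = 0")
          case True thus ?thesis using t by simp
        next
          case False
          hence "(\<lambda>x y. y \<le> x) (L ! (s - 1)) (L ! (s - 1 + t))"
            using t by (intro sorted_wrt_nth_less[OF srt]) auto
          thus ?thesis using t by simp
        qed
      qed
      thus ?thesis using lt by (auto simp: filter_empty_conv)
    qed
    have "length (filter (\<lambda>v. c \<le> v) L) = length (filter (\<lambda>v. c \<le> v) (take (s - 1) L)) + length (filter (\<lambda>v. c \<le> v) (drop (s - 1) L))"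
      by (metis append_take_drop_id filter_append length_append)
    also have "\<dots> \<le> s - 1" using dr
      by (simp add: order_trans[OF length_filter_le])
    finally show False using ge s0 by linarith
  qed
qed

lemma step_props:
  fixes f :: "real^'n \<Rightarrow> real" and grad :: "real^'n \<Rightarrow> real^'n"
  assumes deriv: "\<And>x. (f has_derivative (\<lambda>h. grad x \<bullet> h)) (at x)"
    and L2: "L2_const grad L2" and c2: "2 \<le> CARD('n)" and bdd: "\<exists>m. \<forall>x. m \<le> f x"
    and pos: "0 < L2" and st: "pss_step f grad s x x'"
  shows "f x' \<le> f x" "l0norm x \<le> s"
    "\<And>j. j \<in> I1 x \<Longrightarrow> (grad x $ j)\<^sup>2 \<le> 2*L2*(f x - f x')"
    "\<And>j. l0norm x < s \<Longrightarrow> (grad x $ j)\<^sup>2 \<le> 2*L2*(f x - f x')"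
    "l0norm x = s \<Longrightarrow> \<exists>m i2. m \<in> I1 x \<and> (\<forall>j\<in>I1 x. \<bar>x $ m\<bar> \<le> \<bar>x $ j\<bar>) \<and>
        i2 \<in> I0 x \<and> (\<forall>j\<in>I0 x. \<bar>grad x $ j\<bar> \<le> \<bar>grad x $ i2\<bar>) \<and>
        f x' \<le> f x - x $ m * grad x $ m - (grad x $ i2)\<^sup>2 / (2*L2) + L2/2 * (x $ m)\<^sup>2"
proof -
  have dec: "\<And>j. (grad x $ j)\<^sup>2 \<le> 2*L2*(f x - lmin f x j)"
  proof -
    fix j have "lmin f x j \<le> f x - (grad x $ j)\<^sup>2 / (2*L2)" by (rule lmin_decr[OF deriv L2 c2 bdd pos])
    thus "(grad x $ j)\<^sup>2 \<le> 2*L2*(f x - lmin f x j)" using pos by (simp add: field_simps)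
  qed
  have lfx: "\<And>j. lmin f x j \<le> f x" using lmin_le[OF bdd, of x _ 0] by simp
  have C: "(l0norm x < s \<and> (\<forall>j. (f x' \<le> lmin f x j) \<or> (x' = x \<and> f x \<le> lmin f x j))) \<or>
           (l0norm x = s \<and> (\<forall>j\<in>I1 x. f x' \<le> lmin f x j) \<and> f x' \<le> f x \<and>
             (\<exists>m i2. m \<in> I1 x \<and> (\<forall>j\<in>I1 x. \<bar>x $ m\<bar> \<le> \<bar>x $ j\<bar>) \<and>
             i2 \<in> I0 x \<and> (\<forall>j\<in>I0 x. \<bar>grad x $ j\<bar> \<le> \<bar>grad x $ i2\<bar>) \<and>
             f x' \<le> lmin f (x - (x $ m) *\<^sub>R axis m 1) i2))"
    using st unfolding pss_step_def
  proof (elim disjE conjE exE)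
    fix i t assume "l0norm x < s" "\<forall>j. lmin f x i \<le> lmin f x j" "is_lmin f x i t" "x' = x + t *\<^sub>R axis i 1"
    thus ?thesis using lmin_eq[OF bdd] by fastforce
  next
    fix i assume "l0norm x < s" "\<forall>j. lmin f x i \<le> lmin f x j" "\<not> lmin f x i < f x" "x' = x"
    moreover hence "\<forall>j. f x \<le> lmin f x j" by (meson not_less order_trans)
    ultimately show ?thesis by blast
  next
    fix i1 i2 m
    assume a: "l0norm x = s" "i1 \<in> I1 x" "\<forall>j\<in>I1 x. lmin f x i1 \<le> lmin f x j" "i2 \<in> I0 x"
      "\<forall>j\<in>I0 x. \<bar>grad x $ j\<bar> \<le> \<bar>grad x $ i2\<bar>" "m \<in> I1 x" "\<forall>j\<in>I1 x. \<bar>x $ m\<bar> \<le> \<bar>x $ j\<bar>"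
      and b: "let y = x - x $ m *\<^sub>R axis m 1
       in lmin f x i1 < lmin f y i2 \<and> (\<exists>T. is_lmin f x i1 T \<and> x' = x + T *\<^sub>R axis i1 1) \<or>
          \<not> lmin f x i1 < lmin f y i2 \<and> (\<exists>T. is_lmin f y i2 T \<and> x' = y + T *\<^sub>R axis i2 1)"
    let ?y = "x - x $ m *\<^sub>R axis m 1"
    have fx': "f x' \<le> lmin f x i1 \<and> f x' \<le> lmin f ?y i2"
      using b unfolding Let_def
    proof (elim disjE conjE exE)
      fix T assume "lmin f x i1 < lmin f ?y i2" "is_lmin f x i1 T" "x' = x + T *\<^sub>R axis i1 1"
      thus ?thesis using lmin_eq[OF bdd] by fastforce
    next
      fix T assume "\<not> lmin f x i1 < lmin f ?y i2" "is_lmin f ?y i2 T" "x' = ?y + T *\<^sub>R axis i2 1"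
      thus ?thesis using lmin_eq[OF bdd, of ?y i2 T] by simp
    qed
    show ?thesis
      apply (rule disjI2)
      using a fx' lfx[of i1] by (auto intro: order_trans)
  qed
  show "l0norm x \<le> s" using st unfolding pss_step_def by auto
  show "f x' \<le> f x" using C lfx by (metis order_trans)
  show "\<And>j. j \<in> I1 x \<Longrightarrow> (grad x $ j)\<^sup>2 \<le> 2*L2*(f x - f x')"
  proof -
    fix j assume j: "j \<in> I1 x"
    from C show "(grad x $ j)\<^sup>2 \<le> 2*L2*(f x - f x')"
    proof (elim disjE conjE)
      assume "\<forall>j. (f x' \<le> lmin f x j) \<or> (x' = x \<and> f x \<le> lmin f x j)"
      hence "(f x' \<le> lmin f x j) \<or> (x' = x \<and> f x \<le> lmin f x j)" by blast
      thus ?thesis using dec[of j] pos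
        by (smt (verit, best) mult_le_cancel_left_pos zero_le_power2)
    next
      assume "\<forall>j\<in>I1 x. f x' \<le> lmin f x j"
      hence "f x' \<le> lmin f x j" using j by blast
      thus ?thesis using dec[of j] pos by (smt (verit, best) mult_le_cancel_left_pos)
    qed
  qed
  show "\<And>j. l0norm x < s \<Longrightarrow> (grad x $ j)\<^sup>2 \<le> 2*L2*(f x - f x')"
  proof -
    fix j assume "l0norm x < s"
    with C have "(f x' \<le> lmin f x j) \<or> (x' = x \<and> f x \<le> lmin f x j)" by auto
    thus "(grad x $ j)\<^sup>2 \<le> 2*L2*(f x - f x')" using dec[of j] pos
      by (smt (verit, best) mult_le_cancel_left_pos zero_le_power2)
  qed
  show "l0norm x = s \<Longrightarrow> \<exists>m i2. m \<in> I1 x \<and> (\<forall>j\<in>I1 x. \<bar>x $ m\<bar> \<le> \<bar>x $ j\<bar>) \<and>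
        i2 \<in> I0 x \<and> (\<forall>j\<in>I0 x. \<bar>grad x $ j\<bar> \<le> \<bar>grad x $ i2\<bar>) \<and>
        f x' \<le> f x - x $ m * grad x $ m - (grad x $ i2)\<^sup>2 / (2*L2) + L2/2 * (x $ m)\<^sup>2"
  proof -
    assume "l0norm x = s"
    with C obtain m i2 where m: "m \<in> I1 x" "\<forall>j\<in>I1 x. \<bar>x $ m\<bar> \<le> \<bar>x $ j\<bar>"
       "i2 \<in> I0 x" "\<forall>j\<in>I0 x. \<bar>grad x $ j\<bar> \<le> \<bar>grad x $ i2\<bar>"
       "f x' \<le> lmin f (x - (x $ m) *\<^sub>R axis m 1) i2" by auto
    have "m \<noteq> i2" using m(1,3) by (auto simp: I1_def I0_def)
    from swap_bound[OF deriv L2 bdd pos this, of x] m show ?thesis by (meson order_trans)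
  qed
qed

lemma step_bound:
  fixes f :: "real^'n \<Rightarrow> real" and grad :: "real^'n \<Rightarrow> real^'n"
  assumes deriv: "\<And>x. (f has_derivative (\<lambda>h. grad x \<bullet> h)) (at x)"
    and L2: "L2_const grad L2" and c2: "2 \<le> CARD('n)" and bdd: "\<exists>m. \<forall>x. m \<le> f x"
    and pos: "0 < L2" and st: "pss_step f grad s x x'" and s0: "0 < s" and sc: "s \<le> CARD('n)"
  shows "(grad x $ i)\<^sup>2 \<le> 2*L2*(f x - f x') + 2*L2*(Ms s z + norm (x - z)) * sqrt (2*L2*(f x - f x'))
           + L2\<^sup>2 * (Ms s z + norm (x - z))\<^sup>2"
proof -
  note P = step_props[OF deriv L2 c2 bdd pos st]
  define \<delta> where "\<delta> = f x - f x'"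
  define A where "A = Ms s z + norm (x - z)"
  have d0: "0 \<le> \<delta>" using P(1) unfolding \<delta>_def by simp
  have A0: "0 \<le> A" unfolding A_def using Ms_props(1)[OF s0 sc, of z] by simp
  have T2: "0 \<le> 2*L2*A * sqrt (2*L2*\<delta>)" using A0 d0 pos by simp
  have T3: "0 \<le> L2\<^sup>2 * A\<^sup>2" by simp
  have "(grad x $ i)\<^sup>2 \<le> 2*L2*\<delta> + 2*L2*A * sqrt (2*L2*\<delta>) + L2\<^sup>2 * A\<^sup>2"
  proof (cases "l0norm x < s")
    case True thus ?thesis using P(4)[OF True, of i] T2 T3 unfolding \<delta>_def by linarith
  next
    case False
    hence eq: "l0norm x = s" using P(2) by simp
    show ?thesis
    proof (cases "i \<in> I1 x")
      case True thus ?thesis using P(3)[OF True] T2 T3 unfolding \<delta>_def by linarith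
    next
      case False
      hence iI0: "i \<in> I0 x" by (auto simp: I1_def I0_def)
      obtain m i2 where m: "m \<in> I1 x" "\<forall>j\<in>I1 x. \<bar>x $ m\<bar> \<le> \<bar>x $ j\<bar>"
        "i2 \<in> I0 x" "\<forall>j\<in>I0 x. \<bar>grad x $ j\<bar> \<le> \<bar>grad x $ i2\<bar>"
        "f x' \<le> f x - x $ m * grad x $ m - (grad x $ i2)\<^sup>2 / (2*L2) + L2/2 * (x $ m)\<^sup>2"
        using P(5)[OF eq] by blast
      have gi: "(grad x $ i)\<^sup>2 \<le> (grad x $ i2)\<^sup>2" using m(4) iI0 abs_le_square_iff by blast
      have "(grad x $ i2)\<^sup>2 / (2*L2) \<le> \<delta> - x $ m * grad x $ m + L2/2 * (x $ m)\<^sup>2"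
        using m(5) unfolding \<delta>_def by linarith
      hence gi2: "(grad x $ i2)\<^sup>2 \<le> 2*L2*\<delta> + 2*L2*(- x $ m * grad x $ m) + L2\<^sup>2 * (x $ m)\<^sup>2"
        using pos by (simp add: field_simps power2_eq_square)
      have gm: "\<bar>grad x $ m\<bar> \<le> sqrt (2*L2*\<delta>)"
        using P(3)[OF m(1)] unfolding \<delta>_def by (metis real_sqrt_abs real_sqrt_le_mono)
      have xm: "\<bar>x $ m\<bar> \<le> A"
      proof -
        have "card (I1 x) \<ge> s" using eq unfolding l0norm_def I1_def by simp
        moreover have "\<forall>j\<in>I1 x. \<bar>x $ m\<bar> - norm (x - z) \<le> \<bar>z $ j\<bar>"
        proof
          fix j assume j: "j \<in> I1 x"
          have "\<bar>(x - z) $ j\<bar> \<le> norm (x - z)" by (rule component_le_norm_cart)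
          thus "\<bar>x $ m\<bar> - norm (x - z) \<le> \<bar>z $ j\<bar>" using m(2) j by auto
        qed
        ultimately have "\<bar>x $ m\<bar> - norm (x - z) \<le> Ms s z" by (rule Ms_props(2)[OF s0 sc])
        thus ?thesis unfolding A_def by simp
      qed
      have "- x $ m * grad x $ m \<le> \<bar>x $ m\<bar> * \<bar>grad x $ m\<bar>" by (simp add: abs_mult[symmetric])
      also have "\<dots> \<le> A * sqrt (2*L2*\<delta>)" using xm gm by (intro mult_mono) auto
      finally have c0: "- x $ m * grad x $ m \<le> A * sqrt (2*L2*\<delta>)" .
      have c1: "2*L2*(- x $ m * grad x $ m) \<le> 2*L2*A * sqrt (2*L2*\<delta>)"
        using pos mult_left_mono[OF c0, of "2*L2"] by (simp add: algebra_simps)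
      have "(x $ m)\<^sup>2 \<le> A\<^sup>2" using xm A0 abs_le_square_iff[of "x $ m" A] by simp
      hence c2: "L2\<^sup>2 * (x $ m)\<^sup>2 \<le> L2\<^sup>2 * A\<^sup>2" by (simp add: mult_left_mono)
      show ?thesis using gi gi2 c1 c2 by linarith
    qed
  qed
  thus ?thesis unfolding \<delta>_def A_def .
qed

theorem theorem3p4:
  fixes f :: "real^'n \<Rightarrow> real" and grad :: "real^'n \<Rightarrow> real^'n"
    and s :: nat and xs :: "nat \<Rightarrow> real^'n" and xstar :: "real^'n" and L2 :: real
  assumes deriv: "\<And>x. (f has_derivative (\<lambda>h. grad x \<bullet> h)) (at x)"
    and cont: "continuous_on UNIV grad"
    and bdd: "\<exists>m. \<forall>x. m \<le> f x"
    and lip: "\<exists>L. \<forall>x y. norm (grad x - grad y) \<le> L * norm (x - y)"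
    and s_pos: "0 < s" and s_lt: "s < CARD('n)"
    and attained: "\<And>x i. \<exists>t. is_lmin f x i t"
    and L2: "L2_const grad L2"
    and seq: "pss_sequence f grad s xs"
    and acc: "\<exists>r. strict_mono r \<and> (xs \<circ> r) \<longlonglongrightarrow> xstar"
  shows "(\<forall>i\<in>I1 xstar. grad xstar $ i = 0) \<and>
         (\<forall>i\<in>I0 xstar. \<bar>grad xstar $ i\<bar> \<le> L2 * Ms s xstar)"
proof -
  have c2: "2 \<le> CARD('n)" using s_pos s_lt by linarith
  have L0: "0 \<le> L2" by (rule L2_nonneg[OF L2 c2])
  show ?thesis
  proof (cases "L2 = 0")
    case True
    have "\<And>x a. grad x $ a = 0" using grad_zero[OF deriv L2[unfolded True] c2 bdd] by blast
    thus ?thesis using True by simp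
  next
    case False
    hence pos: "0 < L2" using L0 by simp
    obtain r where r: "strict_mono r" and xr0: "(xs \<circ> r) \<longlonglongrightarrow> xstar" using acc by blast
    have xr: "(\<lambda>j. xs (r j)) \<longlonglongrightarrow> xstar" using xr0 by (simp add: o_def)
    have st: "\<And>k. pss_step f grad s (xs k) (xs (Suc k))" using seq unfolding pss_sequence_def by blast
    define F where "F k = f (xs k)" for k
    have "decseq F" unfolding F_def
      by (rule decseq_SucI) (rule step_props(1)[OF deriv L2 c2 bdd pos st])
    moreover obtain mb where mb: "\<forall>x. mb \<le> f x" using bdd by blast
    hence "\<forall>i. mb \<le> F i" unfolding F_def by blast
    ultimately obtain l where Fl: "F \<longlonglongrightarrow> l" using decseq_convergent by blast
    have "(\<lambda>k. F k - F (Suc k)) \<longlonglongrightarrow> l - l"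
      by (intro tendsto_diff Fl) (rule LIMSEQ_Suc[OF Fl])
    hence "(\<lambda>k. F k - F (Suc k)) \<longlonglongrightarrow> 0" by simp
    from LIMSEQ_subseq_LIMSEQ[OF this r]
    have dr: "(\<lambda>j. f (xs (r j)) - f (xs (Suc (r j)))) \<longlonglongrightarrow> 0" by (simp add: o_def F_def)
    have "isCont grad xstar" using cont by (simp add: continuous_on_eq_continuous_at)
    from isCont_tendsto_compose[OF this xr]
    have gr: "(\<lambda>j. grad (xs (r j))) \<longlonglongrightarrow> grad xstar" .
    have part1: "\<forall>i\<in>I1 xstar. grad xstar $ i = 0"
    proof
      fix i assume i: "i \<in> I1 xstar"
      have "(\<lambda>j. xs (r j) $ i) \<longlonglongrightarrow> xstar $ i" by (intro tendsto_vec_nth xr)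
      moreover have "xstar $ i \<noteq> 0" using i by (simp add: I1_def)
      ultimately have ev: "eventually (\<lambda>j. xs (r j) $ i \<noteq> 0) sequentially"
        by (rule tendsto_imp_eventually_ne)
      have ev2: "eventually (\<lambda>j. (grad (xs (r j)) $ i)\<^sup>2 \<le> 2*L2*(f (xs (r j)) - f (xs (Suc (r j))))) sequentially"
        using ev by (rule eventually_mono) (intro step_props(3)[OF deriv L2 c2 bdd pos st], simp add: I1_def)
      have l1: "(\<lambda>j. (grad (xs (r j)) $ i)\<^sup>2) \<longlonglongrightarrow> (grad xstar $ i)\<^sup>2"
        by (intro tendsto_intros gr)
      have l2: "(\<lambda>j. 2*L2*(f (xs (r j)) - f (xs (Suc (r j))))) \<longlonglongrightarrow> 2*L2*0"
        by (intro tendsto_intros dr)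
      have "(grad xstar $ i)\<^sup>2 \<le> 2*L2*0"
        by (rule tendsto_le[OF trivial_limit_sequentially l2 l1 ev2])
      thus "grad xstar $ i = 0" by simp
    qed
    have part2: "\<forall>i\<in>I0 xstar. \<bar>grad xstar $ i\<bar> \<le> L2 * Ms s xstar"
    proof
      fix i assume i: "i \<in> I0 xstar"
      have sc: "s \<le> CARD('n)" using s_lt by simp
      let ?Q = "\<lambda>j. 2*L2*(f (xs (r j)) - f (xs (Suc (r j)))) + 2*L2*(Ms s xstar + norm (xs (r j) - xstar)) * sqrt (2*L2*(f (xs (r j)) - f (xs (Suc (r j)))))
           + L2\<^sup>2 * (Ms s xstar + norm (xs (r j) - xstar))\<^sup>2"
      have ev2: "eventually (\<lambda>j. (grad (xs (r j)) $ i)\<^sup>2 \<le> ?Q j) sequentially"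
        by (intro always_eventually allI step_bound[OF deriv L2 c2 bdd pos st s_pos sc])
      have l1: "(\<lambda>j. (grad (xs (r j)) $ i)\<^sup>2) \<longlonglongrightarrow> (grad xstar $ i)\<^sup>2"
        by (intro tendsto_intros gr)
      have l2: "?Q \<longlonglongrightarrow> 2*L2*0 + 2*L2*(Ms s xstar + norm (xstar - xstar)) * sqrt (2*L2*0)
           + L2\<^sup>2 * (Ms s xstar + norm (xstar - xstar))\<^sup>2"
        by (intro tendsto_intros dr xr)
      have "(grad xstar $ i)\<^sup>2 \<le> 2*L2*0 + 2*L2*(Ms s xstar + norm (xstar - xstar)) * sqrt (2*L2*0)
           + L2\<^sup>2 * (Ms s xstar + norm (xstar - xstar))\<^sup>2"
        by (rule tendsto_le[OF trivial_limit_sequentially l2 l1 ev2])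
      hence "\<bar>grad xstar $ i\<bar>\<^sup>2 \<le> (L2 * Ms s xstar)\<^sup>2" by (simp add: power_mult_distrib)
      moreover have "0 \<le> L2 * Ms s xstar" using L0 Ms_props(1)[OF s_pos sc, of xstar] by simp
      ultimately show "\<bar>grad xstar $ i\<bar> \<le> L2 * Ms s xstar" by (rule power2_le_imp_le)
    qed
    show ?thesis using part1 part2 by blast
  qed
qed

end
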